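(* Let $\beta\in B$ be an inversion point whose left and right vectors are both equal to $(0,0,-1)\in S^2$. For $p=(a,b,c)\in\mathbb{R}^3$ put $q=a+ib\in\mathbb{C}$, and for $P=(A,B,C)$ put $Q=A+iB$; these are the orthogonal projections to the $xy$-plane, identified with $\mathbb{C}$. There is a bijection $\beta\mapsto\kappa_\beta$ from the set of such inversion points onto the set of inversions of $\mathbb{C}$, i.e. maps $z\mapsto \frac{\alpha}{z-z_0}+w_0$ with $\alpha\in\mathbb{C}^*$ and $z_0,w_0\in\mathbb{C}$. It has the following property: for all $p,P\in\mathbb{R}^3$, the pseudo spherical condition for $(p,P)$ at $\beta$ holds if and only if $q$ lies in the domain of $\kappa_\beta$ and $\kappa_\beta(q)=Q$. Likewise, consider similarity points $\beta$ whose left and right vectors both equal $(0,0,-1)$. There is a bijection $\beta\mapsto\kappa_\beta$ from the set of such points onto the set of similarities of $\mathbb{C}$, i.e. maps $z\mapsto\alpha z+\gamma$ with $\alpha\in\mathbb{C}^*$ and $\gamma\in\mathbb{C}$. It has the property that, for all $p,P\in\mathbb{R}^3$, the pseudo spherical condition for $(p,P)$ at $\beta$ holds if and only if $\kappa_\beta(q)=Q$.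
   Context: Write a direct isometry of $\mathbb{R}^3$ as $v\mapsto Mv+y$ with $M\in SO(3)$, $y\in\mathbb{R}^3$, and put $x=-M^ty$, $r=\langle y,y\rangle$. It corresponds to the point $(h:M:x:y:r)=(1:m_{11}:\dots:m_{33}:x_1:x_2:x_3:y_1:y_2:y_3:r)\in\mathbb{P}^{16}_{\mathbb{C}}$. $X$ is the complex Zariski closure of the set of all such points. Throughout, $\langle u,u'\rangle=u^tu'$ is the complex bilinear form on $\mathbb{C}^3$. The boundary is $B=X\cap\{h=0\}$. For $\beta=(0:M:x:y:r)\in B$, the matrix $M$ has rank at most $1$; put $N=rM+2yx^t$. The point $\beta$ is: - an inversion point if $M\neq0$ and $N\neq0$; - a butterfly point if $M\neq 0$ and $N=0$; - a similarity point if $M=0$, $x\neq0$ and $y\neq 0$. Left and right vectors. For a nonzero $u=(\alpha,\beta',\gamma)\in\mathbb{C}^3$ with $\langle u,u\rangle=0$, define $S(u)\in S^2$ in two steps. - First map $u$ to $\mathbb{P}^1_{\mathbb{C}}$: send it to $(\alpha-i\beta':\gamma)$ if $(i\alpha+\beta',\gamma)\neq(0,0)$, and to $(\gamma:-\alpha-i\beta')$ otherwise. - Then apply the inverse stereographic projection: $(0:1)\mapsto(0,0,1)$ and $(1:a+ib)\mapsto\frac{1}{a^2+b^2+1}(2a,2b,a^2+b^2-1)$ for $a,b\in\mathbb{R}$. For an inversion or butterfly point, write $M=vw^t$ with $v,w\in\mathbb{C}^3$ nonzero and isotropic. The left vector is $L=S(w)$ and the right vector is $R=S(v)$. For a similarity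 point, $x$ and $y$ are nonzero isotropic vectors, and $L=S(x)$, $R=S(y)$. For example, $S((1,i,0))=(0,0,-1)$. The pseudo spherical condition for $(p,P)\in\mathbb{R}^3\times\mathbb{R}^3$ at $\beta=(0:M:x:y:r)\in B$ is the (complex) equation $$r-2\langle p,x\rangle-2\langle y,P\rangle-2\langle Mp,P\rangle=0.$$ *)

theory Defs
  imports "HOL-Analysis.Analysis"
begin

section \<open>Points of P^16: representatives (h, M, x, y, r)\<close>

type_synonym pt = "complex \<times> (complex^3^3) \<times> (complex^3) \<times> (complex^3) \<times> complex"

definition ph :: "pt \<Rightarrow> complex" where "ph v = fst v"
definition pM :: "pt \<Rightarrow> complex^3^3" where "pM v = fst (snd v)"
definition px :: "pt \<Rightarrow> complex^3" where "px v = fst (snd (snd v))"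
definition py :: "pt \<Rightarrow> complex^3" where "py v = fst (snd (snd (snd v)))"
definition pr :: "pt \<Rightarrow> complex" where "pr v = snd (snd (snd (snd v)))"

definition pscale :: "complex \<Rightarrow> pt \<Rightarrow> pt" where
  "pscale c v = (c * ph v, (\<chi> i j. c * pM v $ i $ j), c *s px v, c *s py v, c * pr v)"

definition proj_class :: "pt \<Rightarrow> pt set" where
  "proj_class v = {pscale c v | c. c \<noteq> 0}"

definition cinner :: "complex^3 \<Rightarrow> complex^3 \<Rightarrow> complex" where
  "cinner u w = (\<Sum>i\<in>UNIV. u $ i * w $ i)"

definition cvec :: "real^3 \<Rightarrow> complex^3" where
  "cvec p = (\<chi> i. complex_of_real (p $ i))"

definition cmat :: "real^3^3 \<Rightarrow> complex^3^3" where
  "cmat M = (\<chi> i j. complex_of_real (M $ i $ j))"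

definition outer :: "complex^3 \<Rightarrow> complex^3 \<Rightarrow> complex^3^3" where
  "outer u w = (\<chi> i j. u $ i * w $ j)"

text \<open>The point (1:M:x:y:r) of the direct isometry v |-> Mv + y.\<close>
definition isometry_point :: "real^3^3 \<Rightarrow> real^3 \<Rightarrow> pt" where
  "isometry_point M y =
     (1, cmat M, cvec (- (transpose M *v y)), cvec y, complex_of_real (y \<bullet> y))"

definition affine_pts :: "pt set" where
  "affine_pts = {isometry_point M y | M y. orthogonal_matrix M \<and> det M = 1}"

inductive_set polyfun :: "(pt \<Rightarrow> complex) set" where
  pconst: "(\<lambda>v. c) \<in> polyfun"
| ph: "ph \<in> polyfun"
| pM: "(\<lambda>v. pM v $ i $ j) \<in> polyfun"
| px: "(\<lambda>v. px v $ i) \<in> polyfun"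
| py: "(\<lambda>v. py v $ i) \<in> polyfun"
| pr: "pr \<in> polyfun"
| padd: "f \<in> polyfun \<Longrightarrow> g \<in> polyfun \<Longrightarrow> (\<lambda>v. f v + g v) \<in> polyfun"
| pmult: "f \<in> polyfun \<Longrightarrow> g \<in> polyfun \<Longrightarrow> (\<lambda>v. f v * g v) \<in> polyfun"

definition homog :: "nat \<Rightarrow> (pt \<Rightarrow> complex) \<Rightarrow> bool" where
  "homog d f \<longleftrightarrow> (\<forall>c v. f (pscale c v) = c ^ d * f v)"

text \<open>Nonzero representatives of points of the Zariski closure X (in P^16):
  all homogeneous polynomials vanishing on the isometry points vanish there.\<close>
definition X_cone :: "pt set" where
  "X_cone = {v. v \<noteq> (0, 0, 0, 0, 0) \<and>
     (\<forall>f d. f \<in> polyfun \<and> homog d f \<and> (\<forall>u\<in>affine_pts. f u = 0) \<longrightarrow> f v = 0)}"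

definition X :: "pt set set" where "X = proj_class ` X_cone"

text \<open>Representatives of boundary points B = X \<inter> {h = 0}.\<close>
definition boundary_rep :: "pt \<Rightarrow> bool" where
  "boundary_rep v \<longleftrightarrow> v \<in> X_cone \<and> ph v = 0"

definition Nmat :: "pt \<Rightarrow> complex^3^3" where
  "Nmat v = (\<chi> i j. pr v * pM v $ i $ j + 2 * py v $ i * px v $ j)"

definition inversion_rep :: "pt \<Rightarrow> bool" where
  "inversion_rep v \<longleftrightarrow> pM v \<noteq> 0 \<and> Nmat v \<noteq> 0"

definition similarity_rep :: "pt \<Rightarrow> bool" where
  "similarity_rep v \<longleftrightarrow> pM v = 0 \<and> px v \<noteq> 0 \<and> py v \<noteq> 0"

definition isotropic :: "complex^3 \<Rightarrow> bool" where
  "isotropic u \<longleftrightarrow> cinner u u = 0"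

text \<open>Map to P^1, given as a pair of homogeneous coordinates.\<close>
definition to_P1 :: "complex^3 \<Rightarrow> complex \<times> complex" where
  "to_P1 u = (let \<alpha> = u $ 1; \<beta> = u $ 2; \<gamma> = u $ 3 in
     if (\<i> * \<alpha> + \<beta>, \<gamma>) \<noteq> (0, 0) then (\<alpha> - \<i> * \<beta>, \<gamma>) else (\<gamma>, - \<alpha> - \<i> * \<beta>))"

text \<open>Inverse stereographic projection on homogeneous coordinates (z0 : z1):
  (0:1) goes to (0,0,1), and (1 : a+ib) as in the paper.\<close>
definition stereo :: "complex \<times> complex \<Rightarrow> real \<times> real \<times> real" where
  "stereo z = (if fst z = 0 then (0, 0, 1) else
     (let w = snd z / fst z; a = Re w; b = Im w; n = a\<^sup>2 + b\<^sup>2 + 1 in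
       (2 * a / n, 2 * b / n, (a\<^sup>2 + b\<^sup>2 - 1) / n)))"

definition S :: "complex^3 \<Rightarrow> real \<times> real \<times> real" where
  "S u = stereo (to_P1 u)"

definition south :: "real \<times> real \<times> real" where "south = (0, 0, -1)"

text \<open>Left vector S(w) and right vector S(v) for M = v w^t, both equal to (0,0,-1).\<close>
definition lr_south_inv :: "pt \<Rightarrow> bool" where
  "lr_south_inv v \<longleftrightarrow> (\<exists>a b. a \<noteq> 0 \<and> b \<noteq> 0 \<and> isotropic a \<and> isotropic b \<and>
      pM v = outer a b \<and> S b = south \<and> S a = south)"

text \<open>For similarity points L = S(x), R = S(y).\<close>
definition lr_south_sim :: "pt \<Rightarrow> bool" where
  "lr_south_sim v \<longleftrightarrow> S (px v) = south \<and> S (py v) = south"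

definition inv_south_pts :: "pt set set" where
  "inv_south_pts = proj_class ` {v. boundary_rep v \<and> inversion_rep v \<and> lr_south_inv v}"

definition sim_south_pts :: "pt set set" where
  "sim_south_pts = proj_class ` {v. boundary_rep v \<and> similarity_rep v \<and> lr_south_sim v}"

definition psc_rep :: "pt \<Rightarrow> real^3 \<Rightarrow> real^3 \<Rightarrow> bool" where
  "psc_rep v p P \<longleftrightarrow>
     pr v - 2 * cinner (cvec p) (px v) - 2 * cinner (py v) (cvec P)
       - 2 * cinner (pM v *v cvec p) (cvec P) = 0"

definition pseudo_spherical :: "pt set \<Rightarrow> real^3 \<Rightarrow> real^3 \<Rightarrow> bool" where
  "pseudo_spherical \<beta> p P \<longleftrightarrow> (\<forall>v\<in>\<beta>. psc_rep v p P)"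

definition proj_xy :: "real^3 \<Rightarrow> complex" where
  "proj_xy p = Complex (p $ 1) (p $ 2)"

definition inversions_C :: "(complex \<Rightarrow> complex option) set" where
  "inversions_C = {f. \<exists>\<alpha> z0 w0. \<alpha> \<noteq> 0 \<and>
     f = (\<lambda>z. if z = z0 then None else Some (\<alpha> / (z - z0) + w0))}"

definition similarities_C :: "(complex \<Rightarrow> complex) set" where
  "similarities_C = {f. \<exists>\<alpha> \<gamma>. \<alpha> \<noteq> 0 \<and> f = (\<lambda>z. \<alpha> * z + \<gamma>)}"

end

theory Submission imports Defs "HOL-Complex_Analysis.Conformal_Mappings" begin

lemma coords[simp]: "ph (a,b,c,d,e) = a" "pM (a,b,c,d,e) = b" "px (a,b,c,d,e) = c"
  "py (a,b,c,d,e) = d" "pr (a,b,c,d,e) = e"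
  by (simp_all add: ph_def pM_def px_def py_def pr_def)

lemma pt_eq: "v = w \<longleftrightarrow> ph v = ph w \<and> pM v = pM w \<and> px v = px w \<and> py v = py w \<and> pr v = pr w"
  by (cases v; cases w) (simp add: ph_def pM_def px_def py_def pr_def)

lemma pscale_simps[simp]: "ph (pscale c v) = c * ph v" "pM (pscale c v) $ i $ j = c * pM v $ i $ j"
  "px (pscale c v) = c *s px v" "py (pscale c v) = c *s py v" "pr (pscale c v) = c * pr v"
  by (simp_all add: pscale_def)

lemma pscale_pscale: "pscale c (pscale d v) = pscale (c*d) v"
  by (simp add: pt_eq vec_eq_iff pscale_def)

lemma pscale_1: "pscale 1 v = v"
  by (simp add: pt_eq vec_eq_iff pscale_def)

definition holpt :: "(complex \<Rightarrow> pt) \<Rightarrow> complex set \<Rightarrow> bool" where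
 "holpt \<Psi> D \<longleftrightarrow> (\<lambda>z. ph (\<Psi> z)) holomorphic_on D \<and> (\<forall>i j. (\<lambda>z. pM (\<Psi> z) $ i $ j) holomorphic_on D)
   \<and> (\<forall>i. (\<lambda>z. px (\<Psi> z) $ i) holomorphic_on D) \<and> (\<forall>i. (\<lambda>z. py (\<Psi> z) $ i) holomorphic_on D)
   \<and> (\<lambda>z. pr (\<Psi> z)) holomorphic_on D"

lemma polyfun_holo: "f \<in> polyfun \<Longrightarrow> holpt \<Psi> D \<Longrightarrow> (\<lambda>z. f (\<Psi> z)) holomorphic_on D"
  by (induction rule: polyfun.induct) (auto simp: holpt_def intro!: holomorphic_intros)

lemma polyfun_sum: "(\<And>i. f i \<in> polyfun) \<Longrightarrow> (\<lambda>v. \<Sum>i\<in>(UNIV::3 set). f i v) \<in> polyfun"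
  unfolding sum_3 by (intro polyfun.padd) auto

lemma polyfun_diff: "f \<in> polyfun \<Longrightarrow> g \<in> polyfun \<Longrightarrow> (\<lambda>v. f v - g v) \<in> polyfun"
proof -
  assume a: "f \<in> polyfun" "g \<in> polyfun"
  have "(\<lambda>v. f v + (\<lambda>v. -1) v * g v) \<in> polyfun"
    by (intro polyfun.padd polyfun.pmult a polyfun.pconst)
  thus ?thesis by simp
qed

lemma proj_class_pscale: "c \<noteq> 0 \<Longrightarrow> proj_class (pscale c v) = proj_class v"
  unfolding proj_class_def
proof (intro set_eqI iffI)
  fix w assume "c \<noteq> 0" "w \<in> {pscale d (pscale c v) |d. d \<noteq> 0}"
  then obtain d where "d \<noteq> 0" "w = pscale (d*c) v" by (auto simp: pscale_pscale)
  with \<open>c\<noteq>0\<close> show "w \<in> {pscale d v |d. d \<noteq> 0}" by auto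
next
  fix w assume c: "c \<noteq> 0" and "w \<in> {pscale d v |d. d \<noteq> 0}"
  then obtain d where d: "d \<noteq> 0" "w = pscale d v" by auto
  hence "w = pscale (d/c) (pscale c v)" using c by (simp add: pscale_pscale)
  moreover have "d/c \<noteq> 0" using c d by simp
  ultimately show "w \<in> {pscale d (pscale c v) |d. d \<noteq> 0}" by blast
qed


definition isoc :: "complex^3^3 \<Rightarrow> complex^3 \<Rightarrow> pt" where
  "isoc M y = (1, M, -(transpose M *v y), y, cinner y y)"

definition Mt :: "complex \<Rightarrow> complex^3^3" where
  "Mt t = vector [vector [(1-t^2)/(1+t^2), 2*t/(1+t^2), 0],
                  vector [2*t/(1+t^2), -((1-t^2)/(1+t^2)), 0], vector [0,0,-1]]"

definition Mr :: "real \<Rightarrow> real^3^3" where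
  "Mr t = vector [vector [(1-t^2)/(1+t^2), 2*t/(1+t^2), 0],
                  vector [2*t/(1+t^2), -((1-t^2)/(1+t^2)), 0], vector [0,0,-1]]"

lemma holpt_isoc:
  assumes "\<forall>i j. (\<lambda>z. M z $ i $ j) holomorphic_on D" "\<forall>i. (\<lambda>z. y z $ i) holomorphic_on D"
  shows "holpt (\<lambda>z. isoc (M z) (y z)) D"
  using assms unfolding holpt_def isoc_def
  by (simp add: matrix_vector_mult_def transpose_def cinner_def) (intro allI conjI holomorphic_intros; simp)

lemma key_id: "(1 + t^2 \<noteq> 0) \<Longrightarrow> (1 - t^2)*(1-t^2)/((1+t^2)*(1+t^2)) + 4*(t*t)/((1+t^2)*(1+t^2)) = (1::'a::field)"
proof -
  assume n: "1 + t^2 \<noteq> 0"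
  have "(1 - t^2)*(1-t^2) + 4*(t*t) = (1+t^2)*(1+t^2)" by (simp add: power2_eq_square algebra_simps)
  thus ?thesis using n by (simp add: add_divide_distrib[symmetric])
qed

lemma Mr_orth: "orthogonal_matrix (Mr t)"
proof -
  have n: "1 + t^2 \<noteq> 0" by (smt (verit) zero_le_power2)
  show ?thesis unfolding orthogonal_matrix
    by (simp add: vec_eq_iff matrix_matrix_mult_def transpose_def mat_def sum_3 forall_3 Mr_def)
       (use key_id[OF n] in \<open>simp add: add.commute\<close>)
qed

lemma Mr_det: "det (Mr t) = 1"
proof -
  have n: "1 + t^2 \<noteq> 0" by (smt (verit) zero_le_power2)
  show ?thesis unfolding det_3 by (simp add: Mr_def) (use key_id[OF n] in \<open>simp add: power2_eq_square\<close>)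
qed

lemma Mt_real: "Mt (complex_of_real t) = cmat (Mr t)"
  by (simp add: vec_eq_iff forall_3 Mt_def Mr_def cmat_def)

lemma isoc_real: "isoc (cmat M) (cvec y) = isometry_point M y"
  by (simp add: isoc_def isometry_point_def vec_eq_iff cmat_def cvec_def matrix_vector_mult_def
      transpose_def cinner_def inner_vec_def)

lemma islimpt_reals: "0 islimpt (range complex_of_real)"
  unfolding islimpt_approachable
proof (intro allI impI)
  fix e :: real assume "0 < e"
  thus "\<exists>x'\<in>range complex_of_real. x' \<noteq> 0 \<and> dist x' 0 < e"
    by (intro bexI[OF _ rangeI[of complex_of_real "e/2"]]) auto
qed

lemma ident_real:
  assumes "g holomorphic_on D" "open D" "connected D" "\<And>x. complex_of_real x \<in> D"
    "\<And>x. g (complex_of_real x) = 0" "z \<in> D"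
  shows "g z = 0"
  by (rule analytic_continuation[of g D "range complex_of_real" 0]) (use assms islimpt_reals assms(4)[of 0] in auto)


definition D1 :: "complex set" where "D1 = {t. 1 + t^2 \<noteq> 0}"

lemma D1_eq: "D1 = - {\<i>, -\<i>}"
proof -
  have "1 + t^2 = (t - \<i>) * (t + \<i>)" for t :: complex
    by (simp add: power2_eq_square algebra_simps)
  hence "1 + t^2 = 0 \<longleftrightarrow> t = \<i> \<or> t = -\<i>" for t :: complex
    by (simp add: eq_neg_iff_add_eq_0)
  thus ?thesis unfolding D1_def by auto
qed

lemma D1_open: "open D1" unfolding D1_eq by (intro open_Compl finite_imp_closed) auto

lemma D1_conn: "connected D1" unfolding D1_eq
  by (intro path_connected_imp_connected path_connected_complement_countable) auto

lemma D1_real: "complex_of_real x \<in> D1"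
proof -
  have "1 + x^2 \<noteq> 0" by (smt (verit) zero_le_power2)
  hence "complex_of_real (1 + x^2) \<noteq> 0" by (metis of_real_eq_0_iff)
  moreover have "complex_of_real (1 + x^2) = 1 + (complex_of_real x)^2" by simp
  ultimately show ?thesis unfolding D1_def by simp
qed

lemma Mt_holo: "\<forall>i j. (\<lambda>t. Mt t $ i $ j) holomorphic_on D1"
  unfolding forall_3 Mt_def by (simp; intro conjI holomorphic_intros; simp add: D1_def)

lemma vec3_holo: "\<forall>i. (\<lambda>z. (vector [a z, b z, c z] :: complex^3) $ i) holomorphic_on D"
  if "a holomorphic_on D" "b holomorphic_on D" "c holomorphic_on D" for D
  unfolding forall_3 using that by simp

lemma vec3_eta: "(y::'a::zero^3) = vector [y$1, y$2, y$3]"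
  by (simp add: vec_eq_iff forall_3)

lemma cvec_vector: "cvec (vector [a,b,c]) = vector [complex_of_real a, complex_of_real b, complex_of_real c]"
  by (simp add: vec_eq_iff forall_3 cvec_def)

lemma stepA:
  assumes f: "f \<in> polyfun" and van: "\<forall>u\<in>affine_pts. f u = 0" and t: "t \<in> D1"
  shows "f (isoc (Mt t) y) = 0"
proof -
  have aff: "f (isoc (Mt (complex_of_real \<tau>)) (cvec yr)) = 0" for \<tau> yr
  proof -
    have "isometry_point (Mr \<tau>) yr \<in> affine_pts" unfolding affine_pts_def using Mr_orth Mr_det by blast
    thus ?thesis using van by (simp add: Mt_real isoc_real)
  qed
  have A1: "f (isoc (Mt t) (cvec yr)) = 0" if "t \<in> D1" for t yr
    by (rule ident_real[of "\<lambda>t. f (isoc (Mt t) (cvec yr))" D1])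
       (use that aff D1_open D1_conn D1_real in \<open>auto intro!: polyfun_holo[OF f] holpt_isoc Mt_holo\<close>)
  have A2: "f (isoc (Mt t) (vector [z1, complex_of_real a2, complex_of_real a3])) = 0" for z1 a2 a3
    by (rule ident_real[of "\<lambda>z. f (isoc (Mt t) (vector [z, complex_of_real a2, complex_of_real a3]))" UNIV])
       (use t A1[of t "vector [_, a2, a3]"] in \<open>auto simp: cvec_vector intro!: polyfun_holo[OF f] holpt_isoc[OF _ vec3_holo] holomorphic_intros\<close>)
  have A3: "f (isoc (Mt t) (vector [z1, z2, complex_of_real a3])) = 0" for z1 z2 a3
    by (rule ident_real[of "\<lambda>z. f (isoc (Mt t) (vector [z1, z, complex_of_real a3]))" UNIV])
       (use A2 in \<open>auto intro!: polyfun_holo[OF f] holpt_isoc[OF _ vec3_holo] holomorphic_intros\<close>)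
  have A4: "f (isoc (Mt t) (vector [z1, z2, z3])) = 0" for z1 z2 z3
    by (rule ident_real[of "\<lambda>z. f (isoc (Mt t) (vector [z1, z2, z]))" UNIV])
       (use A3 in \<open>auto intro!: polyfun_holo[OF f] holpt_isoc[OF _ vec3_holo] holomorphic_intros\<close>)
  show ?thesis using A4 vec3_eta[of y] by metis
qed


definition ee :: "complex^3" where "ee = vector [1, \<i>, 0]"

definition Tpt :: "complex \<Rightarrow> complex \<Rightarrow> complex \<Rightarrow> complex \<Rightarrow> pt" where
  "Tpt l m n r = (0, outer (l *s ee) ee, m *s ee, n *s ee, r)"

definition Phi :: "complex \<Rightarrow> complex \<Rightarrow> complex \<Rightarrow> complex \<Rightarrow> pt" where
  "Phi mu nu ka z = (z^2 * (2 - z^2),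
     vector [vector [2 - 2*z^2 + z^2*z^2, 2*\<i>*(1-z^2), 0], vector [2*\<i>*(1-z^2), -(2 - 2*z^2 + z^2*z^2), 0],
             vector [0,0,-(z^2*(2-z^2))]],
     vector [-2*nu*z^2/(2-z^2) + 2*mu, \<i>*(2*nu*z^2/(2-z^2) + 2*mu), z*ka],
     vector [2*nu - 2*mu*z^2/(2-z^2), \<i>*(2*nu + 2*mu*z^2/(2-z^2)), z*ka],
     -16*nu*mu/(2-z^2)^2 + ka^2/(2-z^2))"

lemma ball_ne2: "z \<in> ball (0::complex) 1 \<Longrightarrow> 2 - z^2 \<noteq> 0"
proof
  assume "z \<in> ball 0 1" "2 - z^2 = 0"
  hence "norm z < 1" "z^2 = 2" by auto
  have "(norm z)^2 < 1" using \<open>norm z < 1\<close> by (simp add: abs_square_less_1)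
  moreover have "norm (z^2) = 2" using \<open>z^2 = 2\<close> by simp
  ultimately show False by (simp add: norm_power)
qed

lemma ii2: "(\<i> * a)^2 = -(a^2)" "2 * (\<i> * a) * (\<i> * b) = -(2*a*b)" "\<i> * a * (\<i> * b) = -(a*b)"
  by (simp_all add: power_mult_distrib algebra_simps)

lemma xid1: fixes w mu nu :: complex assumes "w \<noteq> 0" "2 - w \<noteq> 0" shows
 "2*mu - 2*nu*w/(2-w) = -(w*(2-w) * ((1 - (\<i>*(1-w))^2) * (2*nu - 2*mu*w/(2-w)) / (w*(2-w)*(w*(2-w)))
   + 2*(\<i>*(1-w))*(\<i>*(2*nu + 2*mu*w/(2-w))) / (w*(2-w)*(w*(2-w)))))"
proof -
  define q where "q = 2 - w"
  have q: "q \<noteq> 0" "w = 2 - q" using assms q_def by auto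
  show ?thesis unfolding ii2 q_def[symmetric] using q(1) assms(1)
    by (simp add: field_simps) (simp add: q(2) power2_eq_square algebra_simps)
qed

lemma xid2: fixes w mu nu :: complex assumes "w \<noteq> 0" "2 - w \<noteq> 0" shows
 "\<i> * (2 * nu * w / (2 - w) + 2 * mu) =
       - (w * (2 - w) *
          (2 * (\<i> * (1 - w)) * (2 * nu - 2 * mu * w / (2 - w)) /
           (w * (2 - w) * (w * (2 - w))) -
           (1 - (\<i> * (1 - w))^2) * (\<i> * (2 * nu + 2 * mu * w / (2 - w))) /
           (w * (2 - w) * (w * (2 - w)))))"
proof -
  define q where "q = 2 - w"
  have q: "q \<noteq> 0" "w = 2 - q" using assms q_def by auto
  show ?thesis unfolding ii2 q_def[symmetric] using q(1) assms(1)
    by (simp add: field_simps) (simp add: q(2) power2_eq_square algebra_simps)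
qed

lemma rid: fixes w mu nu ka :: complex assumes "w \<noteq> 0" "2 - w \<noteq> 0" shows
  "ka^2 / (2 - w) - 16 * nu * mu / (2 - w)^2 =
     w * (2 - w) *
     ((2 * nu - 2 * mu * w / (2 - w)) * (2 * nu - 2 * mu * w / (2 - w)) /
      (w * (2 - w) * (w * (2 - w))) +
      \<i> * (2 * nu + 2 * mu * w / (2 - w)) *
      (\<i> * (2 * nu + 2 * mu * w / (2 - w))) /
      (w * (2 - w) * (w * (2 - w))) +
      w * (ka * ka) / (w * (2 - w) * (w * (2 - w))))"
proof -
  define q where "q = 2 - w"
  have q: "q \<noteq> 0" "w = 2 - q" using assms q_def by auto
  show ?thesis unfolding ii2 q_def[symmetric] using q(1) assms(1)
    by (simp add: field_simps) (simp add: q(2) power2_eq_square algebra_simps)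
qed

lemma Phi_eq:
  assumes z: "z \<noteq> 0" "2 - z^2 \<noteq> 0"
  shows "Phi mu nu ka z = pscale (z^2 * (2 - z^2)) (isoc (Mt (\<i>*(1-z^2))) ((1/(z^2*(2-z^2))) *s py (Phi mu nu ka z)))"
proof -
  have z2: "z^2 \<noteq> 0" using z by simp
  have tt: "1 + (\<i>*(1-z^2))^2 = z^2*(2-z^2)" by (simp add: power2_eq_square algebra_simps)
  have zk: "z * ka * (z * ka) = z^2 * (ka * ka)" by (simp add: power2_eq_square algebra_simps)
  have tt2: "1 - (1-z^2)^2 = z^2*(2-z^2)" by (simp add: power2_eq_square algebra_simps)
  let ?R = "pscale (z^2 * (2 - z^2)) (isoc (Mt (\<i>*(1-z^2))) ((1/(z^2*(2-z^2))) *s py (Phi mu nu ka z)))"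
  have 1: "ph (Phi mu nu ka z) = ph ?R" by (simp add: Phi_def isoc_def)
  have 4: "py (Phi mu nu ka z) = py ?R" using z z2 by (simp add: isoc_def vec_eq_iff)
  have 3: "px (Phi mu nu ka z) = px ?R"
    using z z2 xid1[OF z2 z(2), of mu nu] xid2[OF z2 z(2), of nu mu]
    by (simp add: Phi_def isoc_def pscale_def Mt_def vec_eq_iff forall_3 tt matrix_vector_mult_def
        transpose_def sum_3 cinner_def)
  have 2: "pM (Phi mu nu ka z) = pM (pscale (z^2 * (2 - z^2)) (isoc (Mt (\<i>*(1-z^2))) ((1/(z^2*(2-z^2))) *s py (Phi mu nu ka z))))"
    using z z2 by (simp add: Phi_def isoc_def pscale_def Mt_def vec_eq_iff forall_3 tt ii2 tt2)
       (simp add: power2_eq_square algebra_simps power4_eq_xxxx)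
  have 5: "pr (Phi mu nu ka z) = pr (pscale (z^2 * (2 - z^2)) (isoc (Mt (\<i>*(1-z^2))) ((1/(z^2*(2-z^2))) *s py (Phi mu nu ka z))))"
    using rid[OF z2 z(2), of ka nu mu] by (simp add: Phi_def isoc_def pscale_def  cinner_def sum_3 zk)
  show ?thesis using 1 2 3 4 5 by (simp add: pt_eq)
qed

lemma islimpt_punct: "x islimpt A \<Longrightarrow> x islimpt (A - {x})"
  unfolding islimpt_def by blast

lemma holpt_Phi: "holpt (Phi mu nu ka) (ball 0 1)"
  unfolding holpt_def Phi_def forall_3
  by simp (intro conjI holomorphic_intros; use ball_ne2 in simp)

lemma homog_pscale: "homog d f \<Longrightarrow> f (pscale c v) = c^d * f v"
  unfolding homog_def by blast


lemma stepB:
  assumes f: "f \<in> polyfun" and h: "homog d f" and van: "\<forall>u\<in>affine_pts. f u = 0"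
  shows "f (Phi mu nu ka 0) = 0"
proof (rule analytic_continuation[of "\<lambda>z. f (Phi mu nu ka z)" "ball 0 1" "ball 0 1 - {0}" 0])
  show "(\<lambda>z. f (Phi mu nu ka z)) holomorphic_on ball 0 1" by (rule polyfun_holo[OF f holpt_Phi])
  show "(0::complex) islimpt ball 0 1 - {0}" by (rule islimpt_punct, rule iffD2[OF islimpt_ball]) simp
  fix z :: complex assume z: "z \<in> ball 0 1 - {0}"
  hence z0: "z \<noteq> 0" "2 - z^2 \<noteq> 0" using ball_ne2 by auto
  have "1 + (\<i>*(1-z^2))^2 = z^2*(2-z^2)" by (simp add: power2_eq_square algebra_simps)
  hence "\<i>*(1-z^2) \<in> D1" using z0 by (simp add: D1_def)
  thus "f (Phi mu nu ka z) = 0"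
    by (subst Phi_eq[OF z0]) (simp add: homog_pscale[OF h] stepA[OF f van])
qed auto

lemma Tpt_holo: "holpt (\<lambda>l. Tpt l m n r) UNIV"
  unfolding holpt_def Tpt_def outer_def by (simp add: holomorphic_intros)

lemma T_van:
  assumes f: "f \<in> polyfun" and h: "homog d f" and van: "\<forall>u\<in>affine_pts. f u = 0"
  shows "f (Tpt l m n r) = 0"
proof -
  have T2: "f (Tpt 2 m n r) = 0" for m n r
  proof -
    define ka where "ka = csqrt (2*r + 2*m*n)"
    have "Tpt 2 m n r = Phi (m/2) (n/2) ka 0"
      unfolding Tpt_def Phi_def pt_eq
      by (simp add: vec_eq_iff forall_3 outer_def ee_def ka_def field_simps)
    thus ?thesis using stepB[OF f h van] by simp
  qed
  have Tne: "f (Tpt l m n r) = 0" if "l \<noteq> 0" for l m n r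
  proof -
    have "Tpt l m n r = pscale (l/2) (Tpt 2 (2*m/l) (2*n/l) (2*r/l))"
      unfolding Tpt_def pt_eq using that by (simp add: vec_eq_iff outer_def pscale_def)
    thus ?thesis by (simp add: homog_pscale[OF h] T2)
  qed
  show ?thesis
  proof (cases "l = 0")
    case False thus ?thesis using Tne by blast
  next
    case True
    have "f (Tpt 0 m n r) = 0"
    proof (rule analytic_continuation[of "\<lambda>l. f (Tpt l m n r)" UNIV "UNIV - {0}" 0])
      show "(\<lambda>l. f (Tpt l m n r)) holomorphic_on UNIV" by (rule polyfun_holo[OF f Tpt_holo])
      show "(0::complex) islimpt UNIV - {0}" by (rule islimpt_punct) simp
      show "f (Tpt z m n r) = 0" if "z \<in> UNIV - {0}" for z using that Tne by blast
    qed auto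
    thus ?thesis using True by simp
  qed
qed


definition F1 :: "3 \<Rightarrow> pt \<Rightarrow> complex" where
  "F1 i v = (\<Sum>j\<in>UNIV. pM v $ i $ j * px v $ j) + ph v * py v $ i"
definition F2 :: "3 \<Rightarrow> pt \<Rightarrow> complex" where
  "F2 i v = (\<Sum>j\<in>UNIV. pM v $ j $ i * py v $ j) + ph v * px v $ i"
definition F3 :: "pt \<Rightarrow> complex" where
  "F3 v = (\<Sum>j\<in>UNIV. px v $ j * px v $ j) - ph v * pr v"
definition F4 :: "pt \<Rightarrow> complex" where
  "F4 v = (\<Sum>j\<in>UNIV. py v $ j * py v $ j) - ph v * pr v"

lemma F_poly: "F1 i \<in> polyfun" "F2 i \<in> polyfun" "F3 \<in> polyfun" "F4 \<in> polyfun"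
  unfolding F1_def[abs_def] F2_def[abs_def] F3_def[abs_def] F4_def[abs_def]
  by (intro polyfun.intros polyfun_sum polyfun_diff; rule polyfun.intros)+

lemma F_homog: "homog 2 (F1 i)" "homog 2 (F2 i)" "homog 2 F3" "homog 2 F4"
  unfolding homog_def F1_def F2_def F3_def F4_def
  by (simp_all add: sum_distrib_left power2_eq_square algebra_simps)

lemma orth_dot: "orthogonal_matrix M \<Longrightarrow> (transpose M *v y) \<bullet> (transpose M *v y) = y \<bullet> (y::real^'n)"
proof -
  assume o: "orthogonal_matrix M"
  have "(transpose M *v y) \<bullet> (transpose M *v y) = (y v* M) \<bullet> (transpose M *v y)" by simp
  also have "\<dots> = y \<bullet> (M *v (transpose M *v y))" by (rule dot_lmul_matrix)
  also have "\<dots> = y \<bullet> y" using o by (simp only: matrix_vector_mul_assoc orthogonal_matrix_def matrix_vector_mul_lid)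
  finally show ?thesis .
qed

lemma orth_mv: "orthogonal_matrix M \<Longrightarrow> M *v (transpose M *v y) = (y::real^'n)"
  by (simp only: matrix_vector_mul_assoc orthogonal_matrix_def matrix_vector_mul_lid)

lemma mv_neg: "M *v (- x) = - (M *v (x::'a::comm_ring_1^'n))"
  by (simp add: vec_eq_iff matrix_vector_mult_def sum_negf)

lemma F_van: "u \<in> affine_pts \<Longrightarrow> F1 i u = 0" "u \<in> affine_pts \<Longrightarrow> F2 i u = 0"
   "u \<in> affine_pts \<Longrightarrow> F3 u = 0" "u \<in> affine_pts \<Longrightarrow> F4 u = 0"
proof -
  assume "u \<in> affine_pts"
  then obtain M y where u: "u = isometry_point M y" and o: "orthogonal_matrix M"
    unfolding affine_pts_def by blast
  have "F1 i u = complex_of_real ((M *v (-(transpose M *v y))) $ i + y $ i)"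
    unfolding u F1_def isometry_point_def
    by (simp del: transpose_matrix_vector add: cmat_def cvec_def matrix_vector_mult_def)
  thus "F1 i u = 0" using orth_mv[OF o, of y] by (simp add: mv_neg)
  show "F2 i u = 0" unfolding u F2_def isometry_point_def
    by (simp del: transpose_matrix_vector add: cmat_def cvec_def matrix_vector_mult_def transpose_def)
  have "F3 u = complex_of_real ((transpose M *v y) \<bullet> (transpose M *v y) - y \<bullet> y)"
    unfolding u F3_def isometry_point_def
    by (simp del: transpose_matrix_vector add: cmat_def cvec_def inner_vec_def)
  thus "F3 u = 0" using orth_dot[OF o, of y] by simp
  show "F4 u = 0" unfolding u F4_def isometry_point_def
    by (simp add: cvec_def inner_vec_def)
qed

lemma Xcone_eqs:
  assumes v: "v \<in> X_cone" and h: "ph v = 0"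
  shows "\<And>i. (\<Sum>j\<in>UNIV. pM v $ i $ j * px v $ j) = 0" "\<And>i. (\<Sum>j\<in>UNIV. pM v $ j $ i * py v $ j) = 0"
    "(\<Sum>j\<in>UNIV. px v $ j * px v $ j) = 0" "(\<Sum>j\<in>UNIV. py v $ j * py v $ j) = 0"
proof -
  have key: "f v = 0" if "f \<in> polyfun" "homog 2 f" "\<And>u. u \<in> affine_pts \<Longrightarrow> f u = 0" for f
    using v that unfolding X_cone_def by blast
  show "(\<Sum>j\<in>UNIV. pM v $ i $ j * px v $ j) = 0" for i
    using key[OF F_poly(1) F_homog(1) F_van(1), of i] h by (simp add: F1_def)
  show "(\<Sum>j\<in>UNIV. pM v $ j $ i * py v $ j) = 0" for i
    using key[OF F_poly(2) F_homog(2) F_van(2), of i] h by (simp add: F2_def)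
  show "(\<Sum>j\<in>UNIV. px v $ j * px v $ j) = 0"
    using key[OF F_poly(3) F_homog(3) F_van(3)] h by (simp add: F3_def)
  show "(\<Sum>j\<in>UNIV. py v $ j * py v $ j) = 0"
    using key[OF F_poly(4) F_homog(4) F_van(4)] h by (simp add: F4_def)
qed


lemma stereo_south: "stereo z = south \<longleftrightarrow> fst z \<noteq> 0 \<and> snd z = 0"
proof (cases "fst z = 0")
  case True thus ?thesis by (simp add: stereo_def south_def)
next
  case False
  define w where "w = snd z / fst z"
  have n: "Re w ^ 2 + Im w ^ 2 + 1 > 0" by (smt (verit) zero_le_power2)
  have "stereo z = south \<longleftrightarrow> Re w = 0 \<and> Im w = 0"
    using False n unfolding stereo_def south_def Let_def w_def[symmetric] by (auto simp: field_simps)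
  also have "\<dots> \<longleftrightarrow> w = 0" by (simp add: complex_eq_iff)
  also have "\<dots> \<longleftrightarrow> snd z = 0" using False by (simp add: w_def)
  finally show ?thesis using False by simp
qed

lemma S_south: "S u = south \<longleftrightarrow> u$3 = 0 \<and> \<i>*u$1 + u$2 \<noteq> 0 \<and> u$1 - \<i>*u$2 \<noteq> 0"
  unfolding S_def to_P1_def Let_def by (simp add: stereo_south) blast

lemma isum3: "cinner u u = u$1*u$1 + u$2*u$2 + u$3*u$3"
  by (simp add: cinner_def sum_3)

lemma iso_south:
  assumes "(\<Sum>j\<in>UNIV. u $ j * u $ j) = 0" "S u = south"
  shows "u$1 \<noteq> 0 \<and> u = (u$1) *s ee"
proof -
  have u3: "u$3 = 0" and a: "\<i>*u$1 + u$2 \<noteq> 0" and b: "u$1 - \<i>*u$2 \<noteq> 0" using assms(2) S_south by auto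
  have "u$1*u$1 + u$2*u$2 = 0" using assms(1) u3 by (simp add: sum_3)
  moreover have "u$1*u$1 + u$2*u$2 = (u$1 + \<i>*u$2) * (u$1 - \<i>*u$2)" by (simp add: algebra_simps)
  ultimately have "u$1 + \<i>*u$2 = 0" using b by simp
  hence "\<i>*(u$1 + \<i>*u$2) = 0" by simp
  hence "\<i>*u$1 - u$2 = 0" by (simp add: algebra_simps)
  hence u2: "u$2 = \<i> * u$1" by simp
  have "u$1 \<noteq> 0" using a u2 by auto
  moreover have "u = (u$1) *s ee" using u2 u3 by (simp add: vec_eq_iff forall_3 ee_def)
  ultimately show ?thesis by blast
qed

lemma south_ee: "c \<noteq> 0 \<Longrightarrow> S (c *s ee) = south"
  by (simp add: S_south ee_def)

lemma iso_ee: "isotropic (c *s ee)"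
  by (simp add: isotropic_def isum3 ee_def) (simp add: algebra_simps)

lemma perp_ee:
  assumes "x$1 + \<i>*x$2 = 0" "(\<Sum>j\<in>UNIV. x $ j * x $ j) = 0"
  shows "x = (x$1) *s ee"
proof -
  have x1: "x$1 = -\<i>*x$2" using assms(1) by (simp add: eq_neg_iff_add_eq_0)
  hence "x$3*x$3 = 0" using assms(2) by (simp add: sum_3 algebra_simps)
  hence "x$3 = 0" by simp
  thus ?thesis using x1 by (simp add: vec_eq_iff forall_3 ee_def) (simp add: algebra_simps)
qed



lemma ee_simps[simp]: "ee$1 = 1" "ee$2 = \<i>" "ee$3 = 0" by (simp_all add: ee_def)

lemma ee_nz[simp]: "\<exists>i. ee$i \<noteq> 0" "ee \<noteq> 0"
  by (auto simp: vec_eq_iff intro: exI[of _ 1])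

lemma ex_ee: "u = (u$1) *s ee \<Longrightarrow> \<exists>c. u = c *s ee \<and> c = u$1"
  by blast

lemma inv_rep_form:
  assumes br: "boundary_rep v" and ir: "inversion_rep v" and lr: "lr_south_inv v"
  shows "\<exists>l m n r. l \<noteq> 0 \<and> l*r + 2*m*n \<noteq> 0 \<and> v = Tpt l m n r"
proof -
  obtain a b where ab: "a \<noteq> 0" "b \<noteq> 0" "isotropic a" "isotropic b" "pM v = outer a b"
     "S b = south" "S a = south" using lr unfolding lr_south_inv_def by blast
  have va: "v \<in> X_cone" "ph v = 0" using br unfolding boundary_rep_def by auto
  obtain a1 where a: "a1 \<noteq> 0" "a = a1 *s ee"
    using iso_south[of a] ab(3,7) unfolding isotropic_def cinner_def by metis
  obtain b1 where b: "b1 \<noteq> 0" "b = b1 *s ee"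
    using iso_south[of b] ab(4,6) unfolding isotropic_def cinner_def by metis
  have M: "pM v $ i $ j = a1 * b1 * ee$i * ee$j" for i j
    using ab(5) a(2) b(2) by (simp add: outer_def)
  have "a1 * b1 * (px v$1 + \<i> * px v$2) = 0"
    using Xcone_eqs(1)[OF va, of 1] by (simp add: sum_3 M algebra_simps)
  hence "px v$1 + \<i> * px v$2 = 0" using a(1) b(1) by simp
  then obtain x1 where x: "px v = x1 *s ee" using perp_ee Xcone_eqs(3)[OF va] by metis
  have "a1 * b1 * (py v$1 + \<i> * py v$2) = 0"
    using Xcone_eqs(2)[OF va, of 1] by (simp add: sum_3 M algebra_simps)
  hence "py v$1 + \<i> * py v$2 = 0" using a(1) b(1) by simp
  then obtain y1 where y: "py v = y1 *s ee" using perp_ee Xcone_eqs(4)[OF va] by metis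
  define l where "l = a1 * b1"
  have vT: "v = Tpt l x1 y1 (pr v)"
    unfolding pt_eq Tpt_def using va(2) x y by (simp add: vec_eq_iff outer_def M l_def)
  have "l*pr v + 2*x1*y1 \<noteq> 0"
  proof
    assume z: "l*pr v + 2*x1*y1 = 0"
    have "Nmat v $ i $ j = (l*pr v + 2*x1*y1) * ee$i * ee$j" for i j
      unfolding Nmat_def using va(2) x y by (simp add: M l_def algebra_simps)
    hence "Nmat v = 0" using z by (simp add: vec_eq_iff)
    thus False using ir by (simp add: inversion_rep_def)
  qed
  moreover have "l \<noteq> 0" using a(1) b(1) l_def by simp
  ultimately show ?thesis using vT by blast
qed


lemma sim_rep_form:
  assumes br: "boundary_rep v" and sr: "similarity_rep v" and lr: "lr_south_sim v"
  shows "\<exists>m n r. m \<noteq> 0 \<and> n \<noteq> 0 \<and> v = Tpt 0 m n r"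
proof -
  have va: "v \<in> X_cone" "ph v = 0" using br unfolding boundary_rep_def by auto
  obtain x1 where x: "x1 \<noteq> 0" "px v = x1 *s ee"
    using iso_south[of "px v"] Xcone_eqs(3)[OF va] lr unfolding lr_south_sim_def by metis
  obtain y1 where y: "y1 \<noteq> 0" "py v = y1 *s ee"
    using iso_south[of "py v"] Xcone_eqs(4)[OF va] lr unfolding lr_south_sim_def by metis
  have "v = Tpt 0 x1 y1 (pr v)"
    unfolding pt_eq Tpt_def using va(2) x y sr by (simp add: vec_eq_iff outer_def similarity_rep_def)
  thus ?thesis using x y by blast
qed

lemma Tpt_Xcone: "Tpt l m n r \<noteq> (0,0,0,0,0) \<Longrightarrow> Tpt l m n r \<in> X_cone"
  unfolding X_cone_def using T_van by blast

lemma Tpt_inv: "l \<noteq> 0 \<Longrightarrow> l*r + 2*m*n \<noteq> 0 \<Longrightarrow>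
   boundary_rep (Tpt l m n r) \<and> inversion_rep (Tpt l m n r) \<and> lr_south_inv (Tpt l m n r)"
proof -
  assume l: "l \<noteq> 0" and d: "l*r + 2*m*n \<noteq> 0"
  have M: "pM (Tpt l m n r) $ 1 $ 1 = l" by (simp add: Tpt_def outer_def)
  hence M0: "pM (Tpt l m n r) \<noteq> 0" using l by auto
  hence "Tpt l m n r \<noteq> (0,0,0,0,0)" by auto
  moreover have "ph (Tpt l m n r) = 0" by (simp add: Tpt_def)
  ultimately have b: "boundary_rep (Tpt l m n r)" unfolding boundary_rep_def using Tpt_Xcone by blast
  have "Nmat (Tpt l m n r) $ 1 $ 1 = l*r + 2*m*n" by (simp add: Nmat_def Tpt_def outer_def algebra_simps)
  hence "Nmat (Tpt l m n r) \<noteq> 0" using d by auto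
  hence i: "inversion_rep (Tpt l m n r)" using M0 by (simp add: inversion_rep_def)
  have "l *s ee \<noteq> 0" "ee \<noteq> 0" using l by (auto simp: vec_eq_iff)
  moreover have "isotropic (l *s ee)" "isotropic ee" using iso_ee[of l] iso_ee[of 1] by auto
  moreover have "S (l *s ee) = south" "S ee = south" using south_ee[of l] south_ee[of 1] l by auto
  ultimately have "lr_south_inv (Tpt l m n r)" unfolding lr_south_inv_def
    by (intro exI[of _ "l *s ee"] exI[of _ ee]) (simp add: Tpt_def)
  thus ?thesis using b i by blast
qed

lemma Tpt_sim: "m \<noteq> 0 \<Longrightarrow> n \<noteq> 0 \<Longrightarrow>
   boundary_rep (Tpt 0 m n r) \<and> similarity_rep (Tpt 0 m n r) \<and> lr_south_sim (Tpt 0 m n r)"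
proof -
  assume m: "m \<noteq> 0" and n: "n \<noteq> 0"
  have x: "px (Tpt 0 m n r) \<noteq> 0" "py (Tpt 0 m n r) \<noteq> 0" using m n by (auto simp: Tpt_def vec_eq_iff)
  hence "Tpt 0 m n r \<noteq> (0,0,0,0,0)" by auto
  moreover have "ph (Tpt 0 m n r) = 0" by (simp add: Tpt_def)
  ultimately have b: "boundary_rep (Tpt 0 m n r)" unfolding boundary_rep_def using Tpt_Xcone by blast
  have "similarity_rep (Tpt 0 m n r)" using x by (simp add: similarity_rep_def Tpt_def vec_eq_iff outer_def)
  moreover have "lr_south_sim (Tpt 0 m n r)" using m n by (simp add: lr_south_sim_def Tpt_def south_ee)
  ultimately show ?thesis using b by blast
qed

definition pse :: "pt \<Rightarrow> real^3 \<Rightarrow> real^3 \<Rightarrow> complex" where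
  "pse v p P = pr v - 2 * cinner (cvec p) (px v) - 2 * cinner (py v) (cvec P)
       - 2 * cinner (pM v *v cvec p) (cvec P)"

lemma pse_scale: "pse (pscale c v) p P = c * pse v p P"
  by (simp add: pse_def cinner_def matrix_vector_mult_def sum_3 algebra_simps)

lemma ps_class: "pseudo_spherical (proj_class v) p P \<longleftrightarrow> pse v p P = 0"
proof -
  have e: "psc_rep w p P \<longleftrightarrow> pse w p P = 0" for w by (simp add: psc_rep_def pse_def)
  have "v = pscale 1 v \<and> (1::complex) \<noteq> 0" using pscale_1[of v] by simp
  hence vin: "v \<in> proj_class v" unfolding proj_class_def by blast
  show ?thesis
  proof
    assume "pseudo_spherical (proj_class v) p P"
    thus "pse v p P = 0" using vin e unfolding pseudo_spherical_def by blast
  next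
    assume z: "pse v p P = 0"
    show "pseudo_spherical (proj_class v) p P" unfolding pseudo_spherical_def
    proof
      fix w assume "w \<in> proj_class v"
      then obtain c where "w = pscale c v" unfolding proj_class_def by blast
      thus "psc_rep w p P" using e z by (simp add: pse_scale)
    qed
  qed
qed


lemma pse_T: "pse (Tpt l m n r) p P = r - 2*m*proj_xy p - 2*n*proj_xy P - 2*l*proj_xy p*proj_xy P"
proof -
  have q: "proj_xy p = complex_of_real (p$1) + \<i> * complex_of_real (p$2)" for p
    by (simp add: proj_xy_def Complex_eq)
  have 1: "cinner (cvec p) (m *s ee) = m * proj_xy p"
    by (simp add: cinner_def cvec_def sum_3 q algebra_simps)
  have 2: "cinner (n *s ee) (cvec P) = n * proj_xy P"
    by (simp add: cinner_def cvec_def sum_3 q algebra_simps)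
  have 3: "outer (l *s ee) ee *v cvec p = (l * proj_xy p) *s ee"
    by (simp add: vec_eq_iff outer_def matrix_vector_mult_def cvec_def sum_3 q algebra_simps)
  have 4: "cinner ((l * proj_xy p) *s ee) (cvec P) = l * proj_xy p * proj_xy P"
    by (simp add: cinner_def cvec_def sum_3 q[of P] algebra_simps)
  show ?thesis unfolding pse_def by (simp add: Tpt_def 1 2 3 4)
qed



lemma bij_char:
  assumes ex: "\<And>\<beta>. \<beta> \<in> A \<Longrightarrow> \<exists>f\<in>B. ch \<beta> f"
  and uniq: "\<And>\<beta> f g. \<beta> \<in> A \<Longrightarrow> ch \<beta> f \<Longrightarrow> ch \<beta> g \<Longrightarrow> f = g"
  and sur: "\<And>f. f \<in> B \<Longrightarrow> \<exists>\<beta>\<in>A. ch \<beta> f"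
  and inj: "\<And>\<beta>1 \<beta>2 f. \<beta>1 \<in> A \<Longrightarrow> \<beta>2 \<in> A \<Longrightarrow> ch \<beta>1 f \<Longrightarrow> ch \<beta>2 f \<Longrightarrow> \<beta>1 = \<beta>2"
  shows "\<exists>\<kappa>. bij_betw \<kappa> A B \<and> (\<forall>\<beta>\<in>A. ch \<beta> (\<kappa> \<beta>))"
proof -
  define \<kappa> where "\<kappa> \<beta> = (SOME f. f \<in> B \<and> ch \<beta> f)" for \<beta>
  have k: "\<kappa> \<beta> \<in> B \<and> ch \<beta> (\<kappa> \<beta>)" if "\<beta> \<in> A" for \<beta>
  proof -
    have "\<exists>f. f \<in> B \<and> ch \<beta> f" using ex[OF that] by blast
    thus ?thesis unfolding \<kappa>_def by (rule someI_ex)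
  qed
  have "bij_betw \<kappa> A B" unfolding bij_betw_def
  proof
    show "inj_on \<kappa> A"
    proof (rule inj_onI)
      fix x y assume "x \<in> A" "y \<in> A" "\<kappa> x = \<kappa> y"
      thus "x = y" using k[of x] k[of y] inj[of x y "\<kappa> x"] by simp
    qed
    show "\<kappa> ` A = B"
    proof
      show "\<kappa> ` A \<subseteq> B" using k by auto
      show "B \<subseteq> \<kappa> ` A"
      proof
        fix f assume "f \<in> B" then obtain \<beta> where b: "\<beta> \<in> A" "ch \<beta> f" using sur by blast
        hence "\<kappa> \<beta> = f" using k[of \<beta>] uniq[of \<beta> "\<kappa> \<beta>" f] by simp
        thus "f \<in> \<kappa> ` A" using b by blast
      qed
    qed
  qed
  thus ?thesis using k by blast
qed

lemma proj_surj: "\<exists>p. proj_xy p = z"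
  by (intro exI[of _ "vector [Re z, Im z, 0]"]) (simp add: proj_xy_def)

definition invf :: "complex \<Rightarrow> complex \<Rightarrow> complex \<Rightarrow> complex \<Rightarrow> complex option" where
  "invf \<alpha> z0 w0 = (\<lambda>z. if z = z0 then None else Some (\<alpha> / (z - z0) + w0))"

definition chi :: "pt set \<Rightarrow> (complex \<Rightarrow> complex option) \<Rightarrow> bool" where
  "chi \<beta> f \<longleftrightarrow> (\<forall>p P. pseudo_spherical \<beta> p P \<longleftrightarrow> f (proj_xy p) = Some (proj_xy P))"

definition chs :: "pt set \<Rightarrow> (complex \<Rightarrow> complex) \<Rightarrow> bool" where
  "chs \<beta> f \<longleftrightarrow> (\<forall>p P. pseudo_spherical \<beta> p P \<longleftrightarrow> f (proj_xy p) = proj_xy P)"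

lemma chi_uniq: "chi \<beta> f \<Longrightarrow> chi \<beta> g \<Longrightarrow> f = g"
proof
  fix z assume c: "chi \<beta> f" "chi \<beta> g"
  obtain p where p: "proj_xy p = z" using proj_surj by blast
  have h: "f z = Some Q \<longleftrightarrow> g z = Some Q" for Q
  proof -
    obtain P where P: "proj_xy P = Q" using proj_surj by blast
    have "pseudo_spherical \<beta> p P \<longleftrightarrow> f (proj_xy p) = Some (proj_xy P)"
         "pseudo_spherical \<beta> p P \<longleftrightarrow> g (proj_xy p) = Some (proj_xy P)"
      using c unfolding chi_def by blast+
    thus ?thesis using p P by simp
  qed
  show "f z = g z"
  proof (cases "f z")
    case None
    show ?thesis
    proof (cases "g z")
      case None thus ?thesis using \<open>f z = None\<close> by simp
    next
      case (Some Q) thus ?thesis using h[of Q] by simp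
    qed
  next
    case (Some Q) thus ?thesis using h[of Q] by simp
  qed
qed

lemma chs_uniq: "chs \<beta> f \<Longrightarrow> chs \<beta> g \<Longrightarrow> f = g"
proof
  fix z assume c: "chs \<beta> f" "chs \<beta> g"
  obtain p where p: "proj_xy p = z" using proj_surj by blast
  obtain P where P: "proj_xy P = f z" using proj_surj by blast
  have "pseudo_spherical \<beta> p P \<longleftrightarrow> f (proj_xy p) = proj_xy P"
       "pseudo_spherical \<beta> p P \<longleftrightarrow> g (proj_xy p) = proj_xy P"
    using c unfolding chs_def by blast+
  thus "f z = g z" using p P by simp
qed

lemma lin_solve: "(B::complex) \<noteq> 0 \<Longrightarrow> A - Q*B = 0 \<longleftrightarrow> Q = A/B"
  by (auto simp: field_simps)

lemma alg2: fixes K l r m q :: complex assumes "K \<noteq> 0" "l \<noteq> 0"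
  shows "((l*r + 2*m*(K - l*q))/(2*l^2)) / (K/l) + -m/l = (r - 2*m*q)/(2*K)"
  using assms by (simp add: field_simps power2_eq_square)


lemma inv_alg:
  fixes l m n r q Q :: complex
  assumes l: "l \<noteq> 0" and d: "l*r + 2*m*n \<noteq> 0"
  shows "r - 2*m*q - 2*n*Q - 2*l*q*Q = 0 \<longleftrightarrow> invf ((l*r + 2*m*n)/(2*l^2)) (-n/l) (-m/l) q = Some Q"
proof (cases "q = -n/l")
  case True
  hence "n + l*q = 0" using l by (simp add: field_simps)
  moreover have "r - 2*m*q - 2*n*Q - 2*l*q*Q = r - 2*m*q - 2*Q*(n + l*q)" by (simp add: algebra_simps)
  ultimately have "r - 2*m*q - 2*n*Q - 2*l*q*Q = r - 2*m*q" by simp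
  also have "\<dots> = (l*r + 2*m*n)/l"
  proof -
    have nq: "n = -(l*q)" using True l by (simp add: field_simps)
    show ?thesis unfolding nq using l by (simp add: field_simps)
  qed
  finally show ?thesis using True l d by (simp add: invf_def)
next
  case False
  have nz: "n + l*q \<noteq> 0"
  proof
    assume "n + l*q = 0"
    hence "l*q = -n" by (simp add: eq_neg_iff_add_eq_0 add.commute)
    hence "q = -n/l" using l by (simp add: field_simps)
    with False show False by simp
  qed
  have e: "r - 2*m*q - 2*n*Q - 2*l*q*Q = (r - 2*m*q) - Q*(2*(n + l*q))" by (simp add: algebra_simps)
  have nz2: "2*(n + l*q) \<noteq> 0" by (rule no_zero_divisors) (simp_all add: nz)
  have "r - 2*m*q - 2*n*Q - 2*l*q*Q = 0 \<longleftrightarrow> Q = (r - 2*m*q)/(2*(n+l*q))"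
    by (simp only: e lin_solve[OF nz2])
  moreover have "(l*r + 2*m*n)/(2*l^2) / (q - -n/l) + -m/l = (r - 2*m*q)/(2*(n+l*q))"
  proof -
    have h1: "q - -n/l = (n + l*q)/l" using l by (simp add: field_simps)
    have h2: "n = (n + l*q) - l*q" by simp
    show ?thesis unfolding h1 using alg2[OF nz l, of r m q] by (simp only: h2[symmetric])
  qed
  ultimately show ?thesis using False by (auto simp: invf_def)
qed

lemma chi_T: "l \<noteq> 0 \<Longrightarrow> l*r + 2*m*n \<noteq> 0 \<Longrightarrow>
    chi (proj_class (Tpt l m n r)) (invf ((l*r + 2*m*n)/(2*l^2)) (-n/l) (-m/l))"
  unfolding chi_def ps_class pse_T by (intro allI inv_alg)

lemma sim_alg:
  fixes m n r q Q :: complex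
  assumes "n \<noteq> 0"
  shows "r - 2*m*q - 2*n*Q - 2*0*q*Q = 0 \<longleftrightarrow> (-m/n) * q + r/(2*n) = Q"
proof -
  have e: "r - 2*m*q - 2*n*Q - 2*0*q*Q = (r - 2*m*q) - Q*(2*n)" by (simp add: algebra_simps)
  have nz2: "2*n \<noteq> 0" using assms by simp
  have "r - 2*m*q - 2*n*Q - 2*0*q*Q = 0 \<longleftrightarrow> Q = (r - 2*m*q)/(2*n)"
    by (simp only: e lin_solve[OF nz2])
  moreover have "(r - 2*m*q)/(2*n) = (-m/n) * q + r/(2*n)" using assms by (simp add: field_simps)
  ultimately show ?thesis by auto
qed

lemma chs_T: "n \<noteq> 0 \<Longrightarrow> chs (proj_class (Tpt 0 m n r)) (\<lambda>z. (-m/n) * z + r/(2*n))"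
  unfolding chs_def ps_class pse_T by (intro allI sim_alg)


lemma invf_in: "a \<noteq> 0 \<Longrightarrow> invf a z0 w0 \<in> inversions_C"
  unfolding inversions_C_def invf_def by blast

lemma invf_inj:
  assumes "invf a z0 w0 = invf a' z0' w0'"
  shows "a = a' \<and> z0 = z0' \<and> w0 = w0'"
proof -
  have e: "invf a z0 w0 z = invf a' z0' w0' z" for z using assms by simp
  have "z0 = z0'" using e[of z0] by (simp add: invf_def split: if_splits)
  moreover have "a + w0 = a' + w0'" using e[of "z0+1"] \<open>z0 = z0'\<close> by (simp add: invf_def)
  moreover have "a/2 + w0 = a'/2 + w0'" using e[of "z0+2"] \<open>z0 = z0'\<close> by (simp add: invf_def)
  hence "2*(a/2 + w0) = 2*(a'/2 + w0')" by simp
  hence h3: "a + 2*w0 = a' + 2*w0'" by (simp add: distrib_left)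
  moreover note h1 = \<open>a + w0 = a' + w0'\<close>
  have "(a + 2*w0) - (a + w0) = (a' + 2*w0') - (a' + w0')" using h1 h3 by simp
  hence w: "w0 = w0'" by (simp add: algebra_simps)
  hence "a = a'" using h1 by simp
  ultimately show ?thesis using w \<open>z0 = z0'\<close> by simp
qed

lemma canon_inv: "l \<noteq> 0 \<Longrightarrow> Tpt l m n r =
   pscale l (Tpt 1 (-(-m/l)) (-(-n/l)) (2*((l*r+2*m*n)/(2*l^2)) - 2*(-n/l)*(-m/l)))"
  unfolding pt_eq by (simp add: Tpt_def vec_eq_iff outer_def field_simps power2_eq_square)

lemma canon_sim: "n \<noteq> 0 \<Longrightarrow> Tpt 0 m n r = pscale n (Tpt 0 (-(-m/n)) 1 (2*(r/(2*n))))"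
  unfolding pt_eq by (simp add: Tpt_def vec_eq_iff outer_def field_simps)

lemma inv_part: "\<exists>\<kappa>. bij_betw \<kappa> inv_south_pts inversions_C \<and> (\<forall>\<beta>\<in>inv_south_pts. chi \<beta> (\<kappa> \<beta>))"
proof (rule bij_char)
  fix \<beta> assume "\<beta> \<in> inv_south_pts"
  then obtain v where v: "\<beta> = proj_class v" "boundary_rep v" "inversion_rep v" "lr_south_inv v"
    unfolding inv_south_pts_def by blast
  then obtain l m n r where T: "l \<noteq> 0" "l*r + 2*m*n \<noteq> 0" "v = Tpt l m n r" using inv_rep_form by blast
  have "invf ((l*r + 2*m*n)/(2*l^2)) (-n/l) (-m/l) \<in> inversions_C"
    by (rule invf_in) (use T in simp)
  thus "\<exists>f\<in>inversions_C. chi \<beta> f" using chi_T[OF T(1,2)] v(1) T(3) by blast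
next
  fix \<beta> f g assume "chi \<beta> f" "chi \<beta> g" thus "f = g" by (rule chi_uniq)
next
  fix f assume "f \<in> inversions_C"
  then obtain a z0 w0 where f: "a \<noteq> 0" "f = invf a z0 w0" unfolding inversions_C_def invf_def by blast
  have d: "1*(2*a - 2*z0*w0) + 2*(-w0)*(-z0) = 2*a" by (simp add: algebra_simps)
  have "boundary_rep (Tpt 1 (-w0) (-z0) (2*a - 2*z0*w0)) \<and> inversion_rep (Tpt 1 (-w0) (-z0) (2*a - 2*z0*w0))
     \<and> lr_south_inv (Tpt 1 (-w0) (-z0) (2*a - 2*z0*w0))" using Tpt_inv[of 1] d f(1) by simp
  hence "proj_class (Tpt 1 (-w0) (-z0) (2*a - 2*z0*w0)) \<in> inv_south_pts" unfolding inv_south_pts_def by blast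
  moreover have "chi (proj_class (Tpt 1 (-w0) (-z0) (2*a - 2*z0*w0))) f"
    using chi_T[of 1 "2*a - 2*z0*w0" "-w0" "-z0"] d f by simp
  ultimately show "\<exists>\<beta>\<in>inv_south_pts. chi \<beta> f" by blast
next
  fix \<beta>1 \<beta>2 f assume b: "\<beta>1 \<in> inv_south_pts" "\<beta>2 \<in> inv_south_pts" "chi \<beta>1 f" "chi \<beta>2 f"
  have canon: "\<exists>a z0 w0. \<beta> = proj_class (Tpt 1 (-w0) (-z0) (2*a - 2*z0*w0)) \<and> f = invf a z0 w0"
    if c1: "\<beta> \<in> inv_south_pts" and c2: "chi \<beta> f" for \<beta>
  proof -
    obtain v where v: "\<beta> = proj_class v" "boundary_rep v" "inversion_rep v" "lr_south_inv v"
      using c1 unfolding inv_south_pts_def by blast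
    then obtain l m n r where T: "l \<noteq> 0" "l*r + 2*m*n \<noteq> 0" "v = Tpt l m n r" using inv_rep_form by blast
    have "f = invf ((l*r + 2*m*n)/(2*l^2)) (-n/l) (-m/l)"
      using chi_uniq[OF c2] chi_T[OF T(1,2)] v(1) T(3) by blast
    moreover have "\<beta> = proj_class (Tpt 1 (-(-m/l)) (-(-n/l)) (2*((l*r+2*m*n)/(2*l^2)) - 2*(-n/l)*(-m/l)))"
      using v(1) T(3) canon_inv[OF T(1), of m n r] proj_class_pscale[OF T(1)] by simp
    ultimately show ?thesis by blast
  qed
  obtain a z0 w0 where 1: "\<beta>1 = proj_class (Tpt 1 (-w0) (-z0) (2*a - 2*z0*w0))" "f = invf a z0 w0"
    using canon b(1,3) by blast
  obtain a' z0' w0' where 2: "\<beta>2 = proj_class (Tpt 1 (-w0') (-z0') (2*a' - 2*z0'*w0'))" "f = invf a' z0' w0'"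
    using canon b(2,4) by blast
  show "\<beta>1 = \<beta>2" using invf_inj[of a z0 w0 a' z0' w0'] 1 2 by simp
qed

lemma sim_part: "\<exists>\<kappa>. bij_betw \<kappa> sim_south_pts similarities_C \<and> (\<forall>\<beta>\<in>sim_south_pts. chs \<beta> (\<kappa> \<beta>))"
proof (rule bij_char)
  fix \<beta> assume "\<beta> \<in> sim_south_pts"
  then obtain v where v: "\<beta> = proj_class v" "boundary_rep v" "similarity_rep v" "lr_south_sim v"
    unfolding sim_south_pts_def by blast
  then obtain m n r where T: "m \<noteq> 0" "n \<noteq> 0" "v = Tpt 0 m n r" using sim_rep_form by blast
  have "(\<lambda>z. (-m/n) * z + r/(2*n)) \<in> similarities_C"
    unfolding similarities_C_def using T by (intro CollectI exI[of _ "-m/n"] exI[of _ "r/(2*n)"]) simp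
  thus "\<exists>f\<in>similarities_C. chs \<beta> f" using chs_T[OF T(2)] v(1) T(3) by blast
next
  fix \<beta> f g assume "chs \<beta> f" "chs \<beta> g" thus "f = g" by (rule chs_uniq)
next
  fix f assume "f \<in> similarities_C"
  then obtain a c where f: "a \<noteq> 0" "f = (\<lambda>z. a * z + c)" unfolding similarities_C_def by blast
  have "boundary_rep (Tpt 0 (-a) 1 (2*c)) \<and> similarity_rep (Tpt 0 (-a) 1 (2*c))
     \<and> lr_south_sim (Tpt 0 (-a) 1 (2*c))" using Tpt_sim[of "-a" 1] f(1) by simp
  hence "proj_class (Tpt 0 (-a) 1 (2*c)) \<in> sim_south_pts" unfolding sim_south_pts_def by blast
  moreover have "chs (proj_class (Tpt 0 (-a) 1 (2*c))) f"
    using chs_T[of 1 "-a" "2*c"] f by simp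
  ultimately show "\<exists>\<beta>\<in>sim_south_pts. chs \<beta> f" by blast
next
  fix \<beta>1 \<beta>2 f assume b: "\<beta>1 \<in> sim_south_pts" "\<beta>2 \<in> sim_south_pts" "chs \<beta>1 f" "chs \<beta>2 f"
  have canon: "\<exists>a c. \<beta> = proj_class (Tpt 0 (-a) 1 (2*c)) \<and> f = (\<lambda>z. a * z + c)"
    if c1: "\<beta> \<in> sim_south_pts" and c2: "chs \<beta> f" for \<beta>
  proof -
    obtain v where v: "\<beta> = proj_class v" "boundary_rep v" "similarity_rep v" "lr_south_sim v"
      using c1 unfolding sim_south_pts_def by blast
    then obtain m n r where T: "m \<noteq> 0" "n \<noteq> 0" "v = Tpt 0 m n r" using sim_rep_form by blast
    have "f = (\<lambda>z. (-m/n) * z + r/(2*n))"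
      using chs_uniq[OF c2] chs_T[OF T(2)] v(1) T(3) by blast
    moreover have "\<beta> = proj_class (Tpt 0 (-(-m/n)) 1 (2*(r/(2*n))))"
      using v(1) T(3) canon_sim[OF T(2), of m r] proj_class_pscale[OF T(2)] by simp
    ultimately show ?thesis by blast
  qed
  obtain a c where 1: "\<beta>1 = proj_class (Tpt 0 (-a) 1 (2*c))" "f = (\<lambda>z. a * z + c)"
    using canon b(1,3) by blast
  obtain a' c' where 2: "\<beta>2 = proj_class (Tpt 0 (-a') 1 (2*c'))" "f = (\<lambda>z. a' * z + c')"
    using canon b(2,4) by blast
  have "c = c'" using fun_cong[of _ _ 0, OF trans[OF 1(2)[symmetric] 2(2)]] by simp
  moreover have "a + c = a' + c'" using fun_cong[of _ _ 1, OF trans[OF 1(2)[symmetric] 2(2)]] by simp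
  ultimately show "\<beta>1 = \<beta>2" using 1 2 by simp
qed

theorem mainTheorem2:
  shows "(\<exists>\<kappa>. bij_betw \<kappa> inv_south_pts inversions_C \<and>
            (\<forall>\<beta>\<in>inv_south_pts. \<forall>p P.
               pseudo_spherical \<beta> p P \<longleftrightarrow> \<kappa> \<beta> (proj_xy p) = Some (proj_xy P))) \<and>
         (\<exists>\<kappa>. bij_betw \<kappa> sim_south_pts similarities_C \<and>
            (\<forall>\<beta>\<in>sim_south_pts. \<forall>p P.
               pseudo_spherical \<beta> p P \<longleftrightarrow> \<kappa> \<beta> (proj_xy p) = proj_xy P))"
  using inv_part sim_part unfolding chi_def chs_def by blast

end
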